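(* Let $\mathcal{X}$ be a finite set, $\underline{Q}$ a lower transition rate operator on $\mathcal{L}(\mathcal{X})$, $t>0$, and let $\Gamma\colon[0,t]\to\mathcal{L}(\mathcal{X})$ be continuously differentiable with $\frac{d}{ds}\Gamma(s)\ge\underline{Q}\Gamma(s)$ (pointwise) for all $s\in[0,t]$. Then $\min\Gamma(t)\ge\min\Gamma(0)$.
   Context: $\mathcal{L}(\mathcal{X})$ is the set of real-valued functions on $\mathcal{X}$ (identified with $\mathbb{R}^{\mathcal{X}}$) with pointwise operations and order, real constants identified with constant functions, $\mathbb{I}_y$ the indicator of $\{y\}$. A lower transition rate operator is a map $\underline{Q}\colon\mathcal{L}(\mathcal{X})\to\mathcal{L}(\mathcal{X})$ such that for all $f,g$, $\lambda\ge0$, $\mu\in\mathbb{R}$, $x,y\in\mathcal{X}$: $\underline{Q}(\mu)=0$; $\underline{Q}(f+g)\ge\underline{Q}f+\underline{Q}g$; $\underline{Q}(\lambda f)=\lambda\underline{Q}f$; $x\ne y\Rightarrow\underline{Q}(\mathbb{I}_y)(x)\ge0$. *)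

theory Defs
  imports "HOL-Analysis.Analysis"
begin

text \<open>L(X) is rendered as the function type 'x \<Rightarrow> real with 'x finite.
  A lower transition rate operator, as in the paper.\<close>

definition lower_transition_rate_operator ::
  "(('x \<Rightarrow> real) \<Rightarrow> ('x \<Rightarrow> real)) \<Rightarrow> bool" where
  "lower_transition_rate_operator Q \<longleftrightarrow>
     (\<forall>\<mu>::real. Q (\<lambda>_. \<mu>) = (\<lambda>_. 0)) \<and>
     (\<forall>f g. \<forall>x. Q (\<lambda>z. f z + g z) x \<ge> Q f x + Q g x) \<and>
     (\<forall>f. \<forall>c::real. c \<ge> 0 \<longrightarrow> Q (\<lambda>z. c * f z) = (\<lambda>x. c * Q f x)) \<and>
     (\<forall>x y. x \<noteq> y \<longrightarrow> Q (indicator {y}) x \<ge> 0)"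

end

theory Submission
  imports Defs
begin

lemma ltro_shift:
  assumes "lower_transition_rate_operator Q"
  shows "Q (\<lambda>z. f z + c) = Q f"
proof
  fix x
  have a: "\<forall>f g. \<forall>x. Q (\<lambda>z. f z + g z) x \<ge> Q f x + Q g x" and
       k: "\<forall>\<mu>::real. Q (\<lambda>_. \<mu>) = (\<lambda>_. 0)"
    using assms unfolding lower_transition_rate_operator_def by auto
  have "Q (\<lambda>z. f z + c) x \<ge> Q f x + Q (\<lambda>_. c) x" using a by blast
  moreover have "Q (\<lambda>z. (f z + c) + (-c)) x \<ge> Q (\<lambda>z. f z + c) x + Q (\<lambda>_. -c) x" using a by blast
  ultimately show "Q (\<lambda>z. f z + c) x = Q f x" using k by (simp add: fun_eq_iff)
qed

lemma ltro_sum: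
  assumes "lower_transition_rate_operator Q" "finite A"
  shows "Q (\<lambda>z. \<Sum>y\<in>A. g y z) x \<ge> (\<Sum>y\<in>A. Q (g y) x)"
  using assms(2)
proof (induction A rule: finite_induct)
  case empty
  have "\<forall>\<mu>::real. Q (\<lambda>_. \<mu>) = (\<lambda>_. 0)"
    using assms unfolding lower_transition_rate_operator_def by auto
  then show ?case by simp
next
  case (insert a A)
  have a: "\<forall>f g. \<forall>x. Q (\<lambda>z. f z + g z) x \<ge> Q f x + Q g x"
    using assms unfolding lower_transition_rate_operator_def by auto
  have "Q (\<lambda>z. g a z + (\<Sum>y\<in>A. g y z)) x \<ge> Q (g a) x + Q (\<lambda>z. \<Sum>y\<in>A. g y z) x"
    using a by blast
  with insert show ?case by simp
qed

lemma ltro_min: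
  fixes f :: "'x::finite \<Rightarrow> real"
  assumes "lower_transition_rate_operator Q" and mn: "\<And>y. f x \<le> (f y::real)"
  shows "Q f x \<ge> 0"
proof -
  have h: "\<forall>f. \<forall>c::real. c \<ge> 0 \<longrightarrow> Q (\<lambda>z. c * f z) = (\<lambda>x. c * Q f x)"
    and i: "\<forall>x y. x \<noteq> y \<longrightarrow> Q (indicator {y}) x \<ge> 0"
    using assms unfolding lower_transition_rate_operator_def by auto
  have eq: "(\<lambda>z. f z + (- f x)) = (\<lambda>z. \<Sum>y\<in>-{x}. (f y - f x) * indicator {y} z)"
  proof
    fix z
    have "(\<Sum>y\<in>-{x}. (f y - f x) * indicator {y} z) = (\<Sum>y\<in>-{x}. if y = z then f y - f x else 0)"
      by (rule sum.cong) (auto simp: indicator_def)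
    also have "\<dots> = (if z \<in> -{x} then f z - f x else 0)" by (rule sum.delta) simp
    also have "\<dots> = f z + (- f x)" by (cases "z = x") simp_all
    finally show "f z + (- f x) = (\<Sum>y\<in>-{x}. (f y - f x) * indicator {y} z)" by simp
  qed
  have "Q f x = Q (\<lambda>z. f z + (- f x)) x" using ltro_shift[OF assms(1), of f "- f x"] by simp
  also have "\<dots> = Q (\<lambda>z. \<Sum>y\<in>-{x}. (f y - f x) * indicator {y} z) x" using eq by simp
  also have "\<dots> \<ge> (\<Sum>y\<in>-{x}. Q (\<lambda>z. (f y - f x) * indicator {y} z) x)"
    by (rule ltro_sum[OF assms(1)]) (rule finite_subset[of _ UNIV], auto)
  finally have "Q f x \<ge> (\<Sum>y\<in>-{x}. Q (\<lambda>z. (f y - f x) * indicator {y} z) x)" .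
  moreover have "(\<Sum>y\<in>-{x}. Q (\<lambda>z. (f y - f x) * indicator {y} z) x) \<ge> 0"
  proof (rule sum_nonneg)
    fix y assume "y \<in> -{x}"
    moreover have "f y - f x \<ge> 0" using mn by simp
    ultimately show "Q (\<lambda>z. (f y - f x) * indicator {y} z) x \<ge> 0"
      using h i by simp
  qed
  ultimately show ?thesis by linarith
qed

theorem lemma3:
  fixes Q :: "('x::finite \<Rightarrow> real) \<Rightarrow> ('x \<Rightarrow> real)"
    and \<Gamma> \<Gamma>' :: "real \<Rightarrow> 'x \<Rightarrow> real"
    and t :: real
  assumes "lower_transition_rate_operator Q"
    and "t > 0"
    and deriv: "\<And>x s. s \<in> {0..t} \<Longrightarrow>
                  ((\<lambda>r. \<Gamma> r x) has_real_derivative \<Gamma>' s x) (at s within {0..t})"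
    and cont: "\<And>x. continuous_on {0..t} (\<lambda>s. \<Gamma>' s x)"
    and ineq: "\<And>x s. s \<in> {0..t} \<Longrightarrow> \<Gamma>' s x \<ge> Q (\<Gamma> s) x"
  shows "Min (range (\<Gamma> t)) \<ge> Min (range (\<Gamma> 0))"
proof -
  let ?m = "Min (range (\<Gamma> 0))"
  have key: "\<Gamma> t y + e * t \<ge> ?m" if e: "e > 0" for e y
  proof -
    define G where "G = (\<lambda>s z. \<Gamma> s z + e * s)"
    have dG: "((\<lambda>r. G r x) has_real_derivative \<Gamma>' s x + e) (at s within {0..t})"
      if "s \<in> {0..t}" for x s
      unfolding G_def using deriv[OF that, of x]
      by (auto intro!: derivative_eq_intros)
    have cG: "continuous_on {0..t} (\<lambda>r. G r x)" for x
      by (rule DERIV_continuous_on) (rule dG)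
    have "\<exists>s\<in>{0..t}. \<forall>r\<in>{0..t}. G s x \<le> G r x" for x
      by (rule continuous_attains_inf) (use cG \<open>t > 0\<close> in auto)
    then obtain sx where sx: "\<And>x. sx x \<in> {0..t}" "\<And>x r. r \<in> {0..t} \<Longrightarrow> G (sx x) x \<le> G r x"
      by metis
    have "Min (range (\<lambda>x. G (sx x) x)) \<in> range (\<lambda>x. G (sx x) x)" by (rule Min_in) auto
    then obtain x1 where x1: "G (sx x1) x1 = Min (range (\<lambda>x. G (sx x) x))" by (metis (mono_tags, lifting) rangeE)
    define s1 where "s1 = sx x1"
    have glob: "G s1 x1 \<le> G r x" if "r \<in> {0..t}" for r x
    proof -
      have "G s1 x1 \<le> G (sx x) x" unfolding s1_def x1 by (rule Min_le) auto
      also have "\<dots> \<le> G r x" using sx(2)[OF that] .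
      finally show ?thesis .
    qed
    have s1: "s1 \<in> {0..t}" unfolding s1_def using sx(1) .
    show ?thesis
    proof (cases "s1 = 0")
      case True
      have "?m \<le> \<Gamma> 0 x1" by (rule Min_le) auto
      also have "\<dots> = G s1 x1" using True by (simp add: G_def)
      also have "\<dots> \<le> G t y" using glob \<open>t > 0\<close> by auto
      finally show ?thesis by (simp add: G_def)
    next
      case False
      have "G s1 x1 \<le> G s1 z" for z using glob s1 by auto
      hence "\<Gamma> s1 x1 \<le> \<Gamma> s1 z" for z by (simp add: G_def)
      hence "Q (\<Gamma> s1) x1 \<ge> 0" by (rule ltro_min[OF assms(1)])
      hence pos: "\<Gamma>' s1 x1 + e > 0" using ineq[OF s1, of x1] e by linarith
      from has_real_derivative_pos_inc_left[OF dG[OF s1] pos]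
      obtain d where d: "d > 0" "\<And>h. h > 0 \<Longrightarrow> s1 - h \<in> {0..t} \<Longrightarrow> h < d \<Longrightarrow> G (s1 - h) x1 < G s1 x1"
        by blast
      define h where "h = min (d/2) s1"
      have "h > 0" using d False s1 by (auto simp: h_def)
      moreover have "s1 - h \<in> {0..t}" using s1 \<open>h > 0\<close> by (auto simp: h_def)
      moreover have "h < d" using d by (auto simp: h_def)
      ultimately have "G (s1 - h) x1 < G s1 x1" using d(2) by blast
      moreover have "G s1 x1 \<le> G (s1 - h) x1" using glob \<open>s1 - h \<in> {0..t}\<close> by blast
      ultimately show ?thesis by linarith
    qed
  qed
  have "\<Gamma> t y \<ge> ?m" for y
  proof (rule field_le_epsilon)
    fix e :: real assume "e > 0"
    then show "?m \<le> \<Gamma> t y + e" using key[of "e / t" y] \<open>t > 0\<close> by simp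
  qed
  moreover have "Min (range (\<Gamma> t)) \<in> range (\<Gamma> t)" by (rule Min_in) auto
  then obtain y where "Min (range (\<Gamma> t)) = \<Gamma> t y" by (metis (mono_tags, lifting) rangeE)
  ultimately show ?thesis by simp
qed

end
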